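(* For every integer $n\ge 0$ the following identities hold: (i) $\displaystyle\sum_{i=0}^{n}B_i(t)\,U_{n-i}\!\left(-\tfrac{t}{2}\right)=\begin{cases}0 & \text{if } n \text{ is even},\\ B_{\frac{n+1}{2}}(t) & \text{if } n \text{ is odd};\end{cases}$ (ii) $\displaystyle\sum_{i=0}^{n}B_i(t)B_{n-i}(-t)=\begin{cases}B_{\frac{n}{2}}(2-t^{2}) & \text{if } n \text{ is even},\\ 0 & \text{if } n \text{ is odd};\end{cases}$ (iii) as an identity of rational functions of $t$, $$\frac{t^{2}}{t^{4}-1}\sum_{i=0}^{n}\left(t^{2i}-\frac{1}{t^{2i}}\right)B_{n-i}\!\left(-t^{2}-\frac{1}{t^{2}}\right)=\begin{cases}B_{\frac{n}{2}}\!\left(-t^{2}-\frac{1}{t^{2}}\right) & \text{if } n \text{ is even},\\ 0 & \text{if } n \text{ is odd}.\end{cases}$$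
   Context: The Stern polynomials $B_n(t)\in\mathbb{Z}[t]$, $n\ge 0$, are defined by $B_0(t)=0$, $B_1(t)=1$, $B_{2n}(t)=tB_n(t)$ and $B_{2n+1}(t)=B_n(t)+B_{n+1}(t)$ for $n\ge 1$. $U_n(t)$ denotes the Chebyshev polynomial of the second kind, determined by $\frac{1}{1-2tx+x^{2}}=\sum_{n\ge 0}U_n(t)x^{n}$. *)

theory Defs
  imports "HOL-Computational_Algebra.Computational_Algebra"
begin

function stern :: "nat \<Rightarrow> 'a::comm_ring_1 poly" where
  "stern n = (if n = 0 then 0 else if n = 1 then 1
              else if even n then [:0, 1:] * stern (n div 2)
              else stern (n div 2) + stern (n div 2 + 1))"
  by auto
termination
  by (relation "measure id") (auto elim!: oddE)

definition chebU :: "nat \<Rightarrow> real \<Rightarrow> real" where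
  "chebU n t = fps_nth (inverse (1 - fps_const (2 * t) * fps_X + fps_X ^ 2)) n"

end

theory Submission
  imports Defs
begin

declare stern.simps[simp del]

lemma stern0[simp]: "stern 0 = 0" by (subst stern.simps) simp
lemma stern1[simp]: "stern (Suc 0) = 1" by (subst stern.simps) simp
lemma stern_even: "m \<ge> 1 \<Longrightarrow> stern (2*m) = [:0,1:] * stern m"
  by (subst stern.simps) auto
lemma stern_odd: "m \<ge> 1 \<Longrightarrow> stern (Suc (2*m)) = stern m + stern (m+1)"
  by (subst stern.simps) auto

definition Af :: "real \<Rightarrow> real fps" where "Af t = Abs_fps (\<lambda>n. poly (stern n) t)"
definition Cf :: "real \<Rightarrow> real fps" where
  "Cf t = Abs_fps (\<lambda>n. if odd n then poly (stern ((n+1) div 2)) t else 0)"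
definition Ee :: "real fps \<Rightarrow> real fps" where
  "Ee f = Abs_fps (\<lambda>n. if even n then f $ (n div 2) else 0)"
definition Qf :: "real \<Rightarrow> real fps" where "Qf t = 1 + fps_const t * fps_X + fps_X^2"

lemma Qf_nth: "(Qf t * f) $ n = f $ n + t * (if n = 0 then 0 else f $ (n-1)) + (if n < 2 then 0 else f $ (n-2))"
  unfolding Qf_def by (simp add: distrib_right mult.assoc fps_X_power_mult_nth)

lemma Qf0[simp]: "Qf t $ 0 = 1" by (simp add: Qf_def)

lemma A_eq: "Af t = Qf t * Cf t"
proof (rule fps_ext)
  fix n
  show "Af t $ n = (Qf t * Cf t) $ n"
  proof (cases "even n")
    case True
    then obtain m where n: "n = 2*m" by auto
    show ?thesis
    proof (cases "m = 0")
      case True thus ?thesis using n by (simp add: Qf_nth Af_def Cf_def)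
    next
      case False
      have "n - 1 = 2*(m-1)+1" "n - 2 = 2*(m-1)" using n False by auto
      moreover have "(2*(m-1)+1+1) div 2 = m" using False by auto
      ultimately show ?thesis using n False by (simp add: Qf_nth Af_def Cf_def stern_even)
    qed
  next
    case False
    then obtain m where n: "n = 2*m+1" by (auto elim: oddE)
    show ?thesis
    proof (cases "m = 0")
      case True thus ?thesis using n by (simp add: Qf_nth Af_def Cf_def)
    next
      case False
      have "n - 1 = 2*m" "n - 2 = 2*(m-1)+1" using n False by auto
      moreover have "(2*(m-1)+1+1) div 2 = m" "(2*m+1+1) div 2 = m+1" using False by auto
      ultimately show ?thesis using n False by (simp add: Qf_nth Af_def Cf_def stern_odd)
    qed
  qed
qed

lemma XC: "fps_X * Cf t = Ee (Af t)"
  by (rule fps_ext) (auto simp: Cf_def Ee_def Af_def elim!: oddE evenE)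

lemma L1: "Af t * inverse (Qf t) = Cf t"
  by (simp add: A_eq mult.commute mult.left_commute inverse_mult_eq_1')

lemma sum_split: "(\<Sum>i=0..2*(m::nat). h i) = (\<Sum>j=0..m. h (2*j)) + (\<Sum>j<m. h (2*j+1)::real)"
proof (induction m)
  case 0 then show ?case by simp
next
  case (Suc m)
  have "(\<Sum>i=0..2*Suc m. h i) = (\<Sum>i=0..2*m. h i) + h (2*m+1) + h (2*m+2)"
    by (simp add: sum.atLeast0_atMost_Suc)
  then show ?case using Suc by (simp add: sum.atLeast0_atMost_Suc)
qed

lemma Ee_mult: "Ee (f * g) = Ee f * Ee g"
proof (rule fps_ext)
  fix n
  show "Ee (f * g) $ n = (Ee f * Ee g) $ n"
  proof (cases "even n")
    case True
    then obtain m where n: "n = 2*m" by auto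
    have "(Ee f * Ee g) $ n = (\<Sum>i=0..2*m. Ee f $ i * Ee g $ (2*m - i))"
      by (simp add: fps_mult_nth n)
    also have "\<dots> = (\<Sum>j=0..m. Ee f $ (2*j) * Ee g $ (2*m - 2*j)) + (\<Sum>j<m. Ee f $ (2*j+1) * Ee g $ (2*m - (2*j+1)))"
      by (rule sum_split)
    also have "\<dots> = (\<Sum>j=0..m. f $ j * g $ (m - j))"
    proof -
      have "(\<Sum>j<m. Ee f $ (2*j+1) * Ee g $ (2*m - (2*j+1))) = 0"
        by (rule sum.neutral) (simp add: Ee_def)
      moreover have "(\<Sum>j=0..m. Ee f $ (2*j) * Ee g $ (2*m - 2*j)) = (\<Sum>j=0..m. f $ j * g $ (m - j))"
      proof (rule sum.cong)
        fix j assume "j \<in> {0..m}"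
        then have "2*m - 2*j = 2*(m-j)" by auto
        then show "Ee f $ (2*j) * Ee g $ (2*m - 2*j) = f $ j * g $ (m - j)"
          by (simp add: Ee_def)
      qed simp
      ultimately show ?thesis by simp
    qed
    also have "\<dots> = Ee (f * g) $ n" by (simp add: Ee_def n fps_mult_nth)
    finally show ?thesis by simp
  next
    case False
    have "(Ee f * Ee g) $ n = (\<Sum>i=0..n. Ee f $ i * Ee g $ (n - i))" by (simp add: fps_mult_nth)
    also have "\<dots> = 0"
    proof (rule sum.neutral, intro ballI)
      fix i assume "i \<in> {0..n}"
      then have "odd i \<or> odd (n - i)" using False by auto
      then show "Ee f $ i * Ee g $ (n - i) = 0" by (auto simp: Ee_def)
    qed
    finally show ?thesis using False by (simp add: Ee_def)
  qed
qed

lemma Ee_diff: "Ee (f - g) = Ee f - Ee g"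
  by (rule fps_ext) (simp add: Ee_def)

lemma Ee_X: "Ee fps_X = fps_X^2"
  by (rule fps_ext) (auto simp: Ee_def elim!: evenE)

lemma Qf_coef: "Qf t $ k = (if k = 0 then 1 else if k = 1 then t else if k = 2 then 1 else 0)"
  by (simp add: Qf_def)

lemma Ee_Q: "Ee (Qf (2 - t^2)) = Qf t * Qf (-t)"
proof (rule fps_ext)
  fix n
  consider "n = (0::nat)" | "n = 1" | "n = 2" | "n = 3" | "n = 4" | "n \<ge> 5" by linarith
  then show "Ee (Qf (2 - t^2)) $ n = (Qf t * Qf (-t)) $ n"
  proof cases
    case 6
    then have "odd n \<or> n div 2 > 2" by auto
    then show ?thesis using 6 by (auto simp: Qf_nth Qf_coef Ee_def)
  qed (auto simp: Qf_nth Qf_coef Ee_def power2_eq_square)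
qed

lemma uniq:
  assumes F: "fps_X^2 * F = P * Ee F" and G: "fps_X^2 * G = P * Ee G"
    and base: "\<And>k. k \<le> 2 \<Longrightarrow> F $ k = G $ k"
  shows "F = G"
proof -
  define H where "H = F - G"
  have H: "fps_X^2 * H = P * Ee H"
    using F G by (simp add: H_def Ee_diff right_diff_distrib)
  have "H $ n = 0" for n
  proof (induction n rule: less_induct)
    case (less n)
    show ?case
    proof (cases "n \<le> 2")
      case True then show ?thesis using base by (simp add: H_def)
    next
      case False
      have "H $ n = (fps_X^2 * H) $ (n+2)" by (simp add: fps_X_power_mult_nth)
      also have "\<dots> = (\<Sum>i=0..n+2. P $ i * Ee H $ (n + 2 - i))" by (simp add: H fps_mult_nth)
      also have "\<dots> = 0"
      proof (rule sum.neutral, intro ballI)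
        fix i assume "i \<in> {0..n+2}"
        have "Ee H $ (n + 2 - i) = 0"
        proof (cases "even (n + 2 - i)")
          case True
          have "(n + 2 - i) div 2 < n" using False by auto
          then show ?thesis using True less by (simp add: Ee_def)
        qed (simp add: Ee_def)
        then show "P $ i * Ee H $ (n + 2 - i) = 0" by simp
      qed
      finally show ?thesis .
    qed
  qed
  then show ?thesis by (simp add: H_def fps_eq_iff)
qed

lemma partii: "Af t * Af (-t) = Ee (Af (2 - t^2))"
proof (rule uniq[where P = "Ee (Qf (2 - t^2))"])
  have "fps_X^2 * (Af t * Af (-t)) = (fps_X * Cf t) * (fps_X * Cf (-t)) * (Qf t * Qf (-t))"
    by (simp add: A_eq power2_eq_square algebra_simps)
  also have "\<dots> = Ee (Qf (2 - t^2)) * Ee (Af t * Af (-t))"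
    by (simp add: XC Ee_Q Ee_mult mult.commute)
  finally show "fps_X^2 * (Af t * Af (-t)) = Ee (Qf (2 - t^2)) * Ee (Af t * Af (-t))" .
next
  let ?s = "2 - t^2"
  have "fps_X^2 * Ee (Af ?s) = Ee fps_X * Ee (Qf ?s * Cf ?s)" by (simp add: Ee_X A_eq)
  also have "\<dots> = Ee (Qf ?s * (fps_X * Cf ?s))" by (simp add: Ee_mult[symmetric] algebra_simps)
  also have "\<dots> = Ee (Qf ?s) * Ee (Ee (Af ?s))" by (simp add: XC Ee_mult)
  finally show "fps_X^2 * Ee (Af ?s) = Ee (Qf ?s) * Ee (Ee (Af ?s))" .
next
  fix k :: nat assume "k \<le> 2"
  then consider "k = 0" | "k = 1" | "k = 2" by linarith
  then show "(Af t * Af (-t)) $ k = Ee (Af (2 - t^2)) $ k"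
    by cases (simp_all add: fps_mult_nth Af_def Ee_def numeral_2_eq_2 sum.atLeast0_atMost_Suc)
qed

lemma chebU_rec:
  "chebU 0 w = 1 \<and> chebU 1 w = 2*w \<and> (\<forall>k. chebU (k+2) w = 2*w*chebU (k+1) w - chebU k w)"
proof -
  define R :: "real fps" where "R = 1 - fps_const (2*w) * fps_X + fps_X^2"
  define V where "V = inverse R"
  have cU: "chebU k w = V $ k" for k by (simp add: chebU_def V_def R_def)
  have R0: "R $ 0 \<noteq> 0" by (simp add: R_def)
  have RV: "R * V = 1" unfolding V_def using R0 by (rule inverse_mult_eq_1')
  have nth: "(R * V) $ k = V $ k - 2*w*(if k = 0 then 0 else V $ (k-1)) + (if k < 2 then 0 else V $ (k-2))" for k
    unfolding R_def by (simp add: algebra_simps mult.assoc fps_X_power_mult_nth fps_X_power_mult_right_nth)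
  have a: "V $ 0 = 1" using nth[of 0] RV by simp
  have b: "V $ 1 = 2*w" using nth[of 1] RV a by simp
  have c: "V $ (k+2) = 2*w*V $ (k+1) - V $ k" for k using nth[of "k+2"] RV by simp
  show ?thesis using a b c by (simp add: cU)
qed

lemma cheb_closed:
  fixes q :: real assumes q0: "q \<noteq> 0" and q1: "q^2 \<noteq> 1"
  shows "chebU k ((q + 1/q)/2) = (q^(k+1) - 1/q^(k+1)) / (q - 1/q)"
proof -
  let ?w = "(q + 1/q)/2"
  have d: "q - 1/q \<noteq> 0"
  proof
    assume "q - 1/q = 0"
    then have "q*q = 1" using q0 by (simp add: field_simps)
    then show False using q1 by (simp add: power2_eq_square)
  qed
  have "chebU k ?w = (q^(k+1) - 1/q^(k+1)) / (q - 1/q) \<and>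
        chebU (k+1) ?w = (q^(k+2) - 1/q^(k+2)) / (q - 1/q)"
  proof (induction k)
    case 0
    have "(q^2 - 1/q^2) / (q - 1/q) = q + 1/q"
      using d q0 by (simp add: field_simps power2_eq_square)
    moreover have "chebU 0 ?w = 1" "chebU 1 ?w = 2 * ?w" using chebU_rec[of ?w] by auto
    ultimately show ?case using d by (simp add: power2_eq_square)
  next
    case (Suc k)
    have "chebU (k+2) ?w = 2*?w*chebU (k+1) ?w - chebU k ?w" using chebU_rec by blast
    also have "\<dots> = ((q + 1/q) * (q^(k+2) - 1/q^(k+2)) - (q^(k+1) - 1/q^(k+1))) / (q - 1/q)"
    proof -
      have gen: "2*((q + 1/q)/2) * (Y/D) - X/D = ((q + 1/q) * Y - X)/D" if "D \<noteq> 0" for X Y D :: real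
        using that q0 by (simp add: field_simps)
      show ?thesis using Suc.IH by (simp only: gen[OF d])
    qed
    also have "(q + 1/q) * (q^(k+2) - 1/q^(k+2)) - (q^(k+1) - 1/q^(k+1)) = q^(k+3) - 1/q^(k+3)"
    proof -
      define p where "p = q^(k+1)"
      have p0: "p \<noteq> 0" using q0 by (simp add: p_def)
      have e: "q^(k+2) = q*p" "q^(k+3) = q*q*p" by (simp_all add: p_def numeral_3_eq_3)
      show ?thesis unfolding e p_def[symmetric] using p0 q0 by (simp add: field_simps)
    qed
    finally show ?case using Suc.IH by (simp add: numeral_3_eq_3)
  qed
  then show ?thesis by simp
qed

lemma cheb_inv: "chebU m (- t / 2) = inverse (Qf t) $ m"
proof -
  have "1 - fps_const (2 * (- t / 2)) * fps_X + fps_X^2 = Qf t"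
    by (simp add: Qf_def fps_const_neg[symmetric] del: fps_const_neg)
  then show ?thesis by (simp add: chebU_def)
qed

lemma parti: "(\<Sum>i=0..n. poly (stern i) t * chebU (n - i) (- t / 2)) =
           (if even n then 0 else poly (stern ((n + 1) div 2)) t)"
proof -
  have "(\<Sum>i=0..n. poly (stern i) t * chebU (n - i) (- t / 2)) = (Af t * inverse (Qf t)) $ n"
    unfolding cheb_inv by (simp add: fps_mult_nth Af_def)
  also have "\<dots> = Cf t $ n" by (simp add: L1)
  finally show ?thesis by (simp add: Cf_def)
qed

lemma partiii:
  fixes t :: real assumes t0: "t \<noteq> 0" and t4: "t ^ 4 \<noteq> 1"
  shows "t ^ 2 / (t ^ 4 - 1) *
             (\<Sum>i=0..n. (t ^ (2 * i) - 1 / t ^ (2 * i)) * poly (stern (n - i)) (- (t ^ 2) - 1 / t ^ 2)) =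
           (if even n then poly (stern (n div 2)) (- (t ^ 2) - 1 / t ^ 2) else 0)"
proof -
  define q where "q = t^2"
  define u where "u = - (t ^ 2) - 1 / t ^ 2"
  have q0: "q \<noteq> 0" using t0 by (simp add: q_def)
  have q1: "q^2 \<noteq> 1" using t4 by (simp add: q_def power_mult[symmetric])
  have w: "- u / 2 = (q + 1/q)/2" by (simp add: u_def q_def)
  have trm: "t ^ 2 / (t ^ 4 - 1) * (t ^ (2 * i) - 1 / t ^ (2 * i)) = (if i = 0 then 0 else chebU (i - 1) (- u / 2))" for i
  proof (cases "i = 0")
    case False
    have "chebU (i - 1) (- u / 2) = (q^i - 1/q^i) / (q - 1/q)"
      using cheb_closed[OF q0 q1, of "i - 1"] False w by simp
    moreover have "t ^ (2 * i) = q^i" by (simp add: q_def power_mult)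
    moreover have "t ^ 2 / (t ^ 4 - 1) = 1 / (q - 1/q)"
    proof -
      have e: "t^4 = q^2" "t^2 = q" by (simp_all add: q_def power_mult[symmetric])
      have "q^2 - 1 \<noteq> 0" using q1 by simp
      then show ?thesis unfolding e using q0 by (simp add: field_simps power2_eq_square)
    qed
    ultimately show ?thesis using False by simp
  qed simp
  have "t ^ 2 / (t ^ 4 - 1) * (\<Sum>i=0..n. (t ^ (2 * i) - 1 / t ^ (2 * i)) * poly (stern (n - i)) u)
     = (\<Sum>i=0..n. (if i = 0 then 0 else chebU (i - 1) (- u / 2)) * poly (stern (n - i)) u)"
    unfolding sum_distrib_left by (rule sum.cong) (simp_all only: mult.assoc[symmetric] trm)
  also have "\<dots> = (if even n then poly (stern (n div 2)) u else 0)"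
  proof (cases n)
    case 0 then show ?thesis by simp
  next
    case (Suc m)
    have "(\<Sum>i=0..n. (if i = 0 then 0 else chebU (i - 1) (- u / 2)) * poly (stern (n - i)) u)
        = (\<Sum>j=0..m. chebU j (- u / 2) * poly (stern (m - j)) u)"
      unfolding Suc by (simp only: sum.atLeast_Suc_atMost[OF le0] sum.shift_bounds_cl_Suc_ivl) simp
    also have "\<dots> = (\<Sum>j=0..m. poly (stern j) u * chebU (m - j) (- u / 2))"
      by (subst sum.atLeastAtMost_rev) (auto intro!: sum.cong)
    also have "\<dots> = (if even n then poly (stern (n div 2)) u else 0)"
      using parti[of u m] Suc by (auto elim!: oddE)
    finally show ?thesis .
  qed
  finally show ?thesis by (simp add: u_def)
qed

theorem theorem3p6:
  fixes n :: nat
  shows "(\<forall>t::real. (\<Sum>i=0..n. poly (stern i) t * chebU (n - i) (- t / 2)) =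
           (if even n then 0 else poly (stern ((n + 1) div 2)) t))
       \<and> (\<forall>t::real. (\<Sum>i=0..n. poly (stern i) t * poly (stern (n - i)) (- t)) =
           (if even n then poly (stern (n div 2)) (2 - t ^ 2) else 0))
       \<and> (\<forall>t::real. t \<noteq> 0 \<longrightarrow> t ^ 4 \<noteq> 1 \<longrightarrow>
           t ^ 2 / (t ^ 4 - 1) *
             (\<Sum>i=0..n. (t ^ (2 * i) - 1 / t ^ (2 * i)) * poly (stern (n - i)) (- (t ^ 2) - 1 / t ^ 2)) =
           (if even n then poly (stern (n div 2)) (- (t ^ 2) - 1 / t ^ 2) else 0))"
proof (intro conjI allI impI)
  fix t :: real
  show "(\<Sum>i=0..n. poly (stern i) t * chebU (n - i) (- t / 2)) =
           (if even n then 0 else poly (stern ((n + 1) div 2)) t)" by (rule parti)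
  have "(\<Sum>i=0..n. poly (stern i) t * poly (stern (n - i)) (- t)) = (Af t * Af (-t)) $ n"
    by (simp add: fps_mult_nth Af_def)
  also have "\<dots> = Ee (Af (2 - t^2)) $ n" by (simp add: partii)
  finally show "(\<Sum>i=0..n. poly (stern i) t * poly (stern (n - i)) (- t)) =
           (if even n then poly (stern (n div 2)) (2 - t ^ 2) else 0)" by (simp add: Ee_def Af_def)
next
  fix t :: real assume "t \<noteq> 0" "t ^ 4 \<noteq> 1"
  then show "t ^ 2 / (t ^ 4 - 1) *
             (\<Sum>i=0..n. (t ^ (2 * i) - 1 / t ^ (2 * i)) * poly (stern (n - i)) (- (t ^ 2) - 1 / t ^ 2)) =
           (if even n then poly (stern (n div 2)) (- (t ^ 2) - 1 / t ^ 2) else 0)"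
    by (rule partiii)
qed

end
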